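(* Let $g$ be an $n$-person WTT game form satisfying the standing assumptions below, let $i\in[n]$ and let $j\neq k$ be elements of $X_i$. Then exactly one of the following holds: (1) $H_j\stackrel{c}{\Longrightarrow}H_k$ for some outcome $c$, and $H_k^{\neq}(j)$ contains two profiles with distinct outcomes $a\neq b$ (both different from $c$); (2) $H_k\stackrel{d}{\Longrightarrow}H_j$ for some outcome $d$, and $H_j^{\neq}(k)$ contains two profiles with distinct outcomes $a\neq b$ (both different from $d$); (3) $H_j\stackrel{c}{\longrightarrow}H_k$ and $H_k\stackrel{d}{\longrightarrow}H_j$ for some outcomes $c\neq d$.
   Context: Let $X_1,\dots,X_n$ and $A$ be finite nonempty sets. An $n$-person game form is a map $g: X_1\times\cdots\times X_n\to A$; elements of $X=X_1\times\cdots\times X_n$ are strategy profiles, elements of $A$ are outcomes. For a direction $i\in[n]$ write $X_{-i}=\prod_{t\neq i}X_t$, and for $s\in X_i$, $y\in X_{-i}$ write $(s,y)$ for the profile with $i$-th coordinate $s$ and other coordinates $y$. The hyperplane perpendicular to direction $i$ at $s\in X_i$ is $H_s=\{x\in X: x_i=s\}$. $g$ is weakly totally tight (WTT) if for every $i\in[n]$, all $s\neq s'$ in $X_i$ and all $y\neq y'$ in $X_{-i}$, at least one of $g(s,y)=g(s,y')$, $g(s,y)=g(s',y)$, $g(s',y')=g(s',y)$, $g(s',y')=g(s,y')$ holds. A set $S\subseteq X$ is a constant region if there is $c\in A$ with $g(x)=c$ for all $x\in S$. For a direction $i$ and distinct $j,k\in X_i$, set $H_j^{\neq}(k)=\{(j,y):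 y\in X_{-i},\ g(j,y)\neq g(k,y)\}$ and $H_j^{=}(k)=H_j\setminus H_j^{\neq}(k)$. We write $H_j\stackrel{c}{\longrightarrow}H_k$ ($H_j$ dominates $H_k$ by $c$) if $g(x)=c$ for all $x\in H_j^{\neq}(k)$; we write $H_j\stackrel{c}{\Longrightarrow}H_k$ ($H_j$ strictly dominates $H_k$ by $c$) if $H_j\stackrel{c}{\longrightarrow}H_k$ and there is no outcome $d$ with $H_k\stackrel{d}{\longrightarrow}H_j$. Standing assumptions: no hyperplane of $g$ is a constant region, and no two distinct parallel hyperplanes are identical, i.e. for every $i$ and distinct $j,k\in X_i$ there is $y\in X_{-i}$ with $g(j,y)\neq g(k,y)$. *)

theory Defs
  imports "HOL-Library.FuncSet"
begin

text \<open>A strategy profile is an element of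
  PiE {..<n} X (undefined outside the players). For direction i, X_{-i} is represented by
  PiE ({..<n} - {i}) X, and the profile (s,y) is y(i := s).\<close>

definition profiles :: "nat \<Rightarrow> (nat \<Rightarrow> 'b set) \<Rightarrow> (nat \<Rightarrow> 'b) set" where
  "profiles n X = PiE {..<n} X"

definition others :: "nat \<Rightarrow> (nat \<Rightarrow> 'b set) \<Rightarrow> nat \<Rightarrow> (nat \<Rightarrow> 'b) set" where
  "others n X i = PiE ({..<n} - {i}) X"

definition WTT :: "nat \<Rightarrow> (nat \<Rightarrow> 'b set) \<Rightarrow> ((nat \<Rightarrow> 'b) \<Rightarrow> 'a) \<Rightarrow> bool" where
  "WTT n X g \<longleftrightarrow>
    (\<forall>i<n. \<forall>s\<in>X i. \<forall>s'\<in>X i. \<forall>y\<in>others n X i. \<forall>y'\<in>others n X i.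
       s \<noteq> s' \<longrightarrow> y \<noteq> y' \<longrightarrow>
       g (y(i := s)) = g (y'(i := s)) \<or> g (y(i := s)) = g (y(i := s')) \<or>
       g (y'(i := s')) = g (y(i := s')) \<or> g (y'(i := s')) = g (y'(i := s)))"

definition constant_region :: "((nat \<Rightarrow> 'b) \<Rightarrow> 'a) \<Rightarrow> (nat \<Rightarrow> 'b) set \<Rightarrow> bool" where
  "constant_region g S \<longleftrightarrow> (\<exists>c. \<forall>x\<in>S. g x = c)"

definition hyperplane :: "nat \<Rightarrow> (nat \<Rightarrow> 'b set) \<Rightarrow> nat \<Rightarrow> 'b \<Rightarrow> (nat \<Rightarrow> 'b) set" where
  "hyperplane n X i s = {x \<in> profiles n X. x i = s}"

definition Hneq :: "nat \<Rightarrow> (nat \<Rightarrow> 'b set) \<Rightarrow> ((nat \<Rightarrow> 'b) \<Rightarrow> 'a) \<Rightarrow> nat \<Rightarrow> 'b \<Rightarrow> 'b \<Rightarrow> (nat \<Rightarrow> 'b) set" where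
  "Hneq n X g i j k = {y(i := j) | y. y \<in> others n X i \<and> g (y(i := j)) \<noteq> g (y(i := k))}"

definition dominates :: "nat \<Rightarrow> (nat \<Rightarrow> 'b set) \<Rightarrow> ((nat \<Rightarrow> 'b) \<Rightarrow> 'a) \<Rightarrow> nat \<Rightarrow> 'b \<Rightarrow> 'b \<Rightarrow> 'a \<Rightarrow> bool" where
  "dominates n X g i j k c \<longleftrightarrow> (\<forall>x\<in>Hneq n X g i j k. g x = c)"

definition strictly_dominates :: "nat \<Rightarrow> (nat \<Rightarrow> 'b set) \<Rightarrow> 'a set \<Rightarrow> ((nat \<Rightarrow> 'b) \<Rightarrow> 'a) \<Rightarrow> nat \<Rightarrow> 'b \<Rightarrow> 'b \<Rightarrow> 'a \<Rightarrow> bool" where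
  "strictly_dominates n X A g i j k c \<longleftrightarrow>
     dominates n X g i j k c \<and> \<not> (\<exists>d\<in>A. dominates n X g i k j d)"

definition exactly_one3 :: "bool \<Rightarrow> bool \<Rightarrow> bool \<Rightarrow> bool" where
  "exactly_one3 P Q R \<longleftrightarrow> (P \<and> \<not> Q \<and> \<not> R) \<or> (\<not> P \<and> Q \<and> \<not> R) \<or> (\<not> P \<and> \<not> Q \<and> R)"

end

theory Submission
  imports Defs
begin

lemma abstract_key:
  assumes "\<forall>y\<in>D. fj y \<noteq> fk y" "\<forall>y\<in>D. \<forall>y'\<in>D. fj y = fj y' \<or> fk y = fk y'"
  shows "(\<exists>c. \<forall>y\<in>D. fj y = c) \<or> (\<exists>d. \<forall>y\<in>D. fk y = d)"
proof (rule ccontr)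
  assume nt: "\<not> ?thesis"
  then obtain y1 y2 where y12: "y1\<in>D" "y2\<in>D" "fj y1 \<noteq> fj y2" by blast
  from nt obtain y3 y4 where y34: "y3\<in>D" "y4\<in>D" "fk y3 \<noteq> fk y4" by blast
  have b: "fk y1 = fk y2" using assms(2) y12 by blast
  have a: "fj y3 = fj y4" using assms(2) y34 by blast
  obtain p where p: "p \<in> D" "fj p \<noteq> fj y3" "fk p = fk y1"
  proof (cases "fj y1 = fj y3")
    case True
    show ?thesis apply (rule that[of y2]) using y12 b True by auto
  next
    case False
    show ?thesis apply (rule that[of y1]) using y12 False by auto
  qed
  obtain q where q: "q \<in> D" "fk q \<noteq> fk y1" "fj q = fj y3"
  proof (cases "fk y3 = fk y1")
    case True
    show ?thesis apply (rule that[of y4]) using y34 a True by auto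
  next
    case False
    show ?thesis apply (rule that[of y3]) using y34 False by auto
  qed
  have "fj p = fj q \<or> fk p = fk q" using assms(2) p(1) q(1) by blast
  then show False using p q by auto
qed

lemma upd_prof:
  assumes "y \<in> others n X i" "i < n" "s \<in> X i"
  shows "y(i := s) \<in> profiles n X"
  using assms unfolding others_def profiles_def PiE_iff by (auto simp: extensional_def)

theorem mainTheorem3:
  fixes n :: nat and X :: "nat \<Rightarrow> 'b set" and A :: "'a set"
    and g :: "(nat \<Rightarrow> 'b) \<Rightarrow> 'a" and i :: nat and j k :: 'b
  assumes finX: "\<forall>t<n. finite (X t) \<and> X t \<noteq> {}"
    and finA: "finite A" "A \<noteq> {}"
    and gA: "g \<in> profiles n X \<rightarrow> A"
    and wtt: "WTT n X g"
    and no_const: "\<forall>t<n. \<forall>s\<in>X t. \<not> constant_region g (hyperplane n X t s)"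
    and no_ident: "\<forall>t<n. \<forall>s\<in>X t. \<forall>s'\<in>X t. s \<noteq> s' \<longrightarrow>
                     (\<exists>y\<in>others n X t. g (y(t := s)) \<noteq> g (y(t := s')))"
    and i: "i < n" and j: "j \<in> X i" and k: "k \<in> X i" and jk: "j \<noteq> k"
  shows "exactly_one3
    (\<exists>c\<in>A. strictly_dominates n X A g i j k c \<and>
        (\<exists>x\<in>Hneq n X g i k j. \<exists>x'\<in>Hneq n X g i k j.
            g x \<noteq> g x' \<and> g x \<noteq> c \<and> g x' \<noteq> c))
    (\<exists>d\<in>A. strictly_dominates n X A g i k j d \<and>
        (\<exists>x\<in>Hneq n X g i j k. \<exists>x'\<in>Hneq n X g i j k.
            g x \<noteq> g x' \<and> g x \<noteq> d \<and> g x' \<noteq> d))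
    (\<exists>c\<in>A. \<exists>d\<in>A. c \<noteq> d \<and> dominates n X g i j k c \<and> dominates n X g i k j d)"
proof -
  define D where "D = {y\<in>others n X i. g (y(i := j)) \<noteq> g (y(i := k))}"
  define fj where "fj y = g (y(i := j))" for y
  define fk where "fk y = g (y(i := k))" for y
  obtain y0 where y0: "y0 \<in> D"
  proof -
    from no_ident i j k jk obtain y where "y \<in> others n X i" "g (y(i := j)) \<noteq> g (y(i := k))"
      by meson
    then show ?thesis using that unfolding D_def by blast
  qed
  have neq: "\<forall>y\<in>D. fj y \<noteq> fk y" unfolding D_def fj_def fk_def by auto
  have inA_j: "fj y \<in> A" if "y \<in> D" for y
  proof -
    have "y \<in> others n X i" using that unfolding D_def by blast
    then have "y(i := j) \<in> profiles n X" using upd_prof[of y n X i j] i j by blast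
    from funcset_mem[OF gA this] show ?thesis unfolding fj_def .
  qed
  have inA_k: "fk y \<in> A" if "y \<in> D" for y
  proof -
    have "y \<in> others n X i" using that unfolding D_def by blast
    then have "y(i := k) \<in> profiles n X" using upd_prof[of y n X i k] i k by blast
    from funcset_mem[OF gA this] show ?thesis unfolding fk_def .
  qed
  have pair: "\<forall>y\<in>D. \<forall>y'\<in>D. fj y = fj y' \<or> fk y = fk y'"
  proof (intro ballI)
    fix y y' assume yy: "y \<in> D" "y' \<in> D"
    show "fj y = fj y' \<or> fk y = fk y'"
    proof (cases "y = y'")
      case False
      have o: "y \<in> others n X i" "y' \<in> others n X i" using yy unfolding D_def by auto
      have "g (y(i := j)) = g (y'(i := j)) \<or> g (y(i := j)) = g (y(i := k)) \<or>
        g (y'(i := k)) = g (y(i := k)) \<or> g (y'(i := k)) = g (y'(i := j))"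
        using wtt i j k jk o False unfolding WTT_def by blast
      then show ?thesis using yy unfolding D_def fj_def fk_def by auto
    qed simp
  qed
  have HjkE: "x \<in> Hneq n X g i j k \<longleftrightarrow> (\<exists>y\<in>D. x = y(i := j))" for x
    unfolding Hneq_def D_def by auto
  have HkjE: "x \<in> Hneq n X g i k j \<longleftrightarrow> (\<exists>y\<in>D. x = y(i := k))" for x
    unfolding Hneq_def D_def by auto
  have domjk: "dominates n X g i j k c \<longleftrightarrow> (\<forall>y\<in>D. fj y = c)" for c
  proof
    assume h: "dominates n X g i j k c"
    show "\<forall>y\<in>D. fj y = c"
    proof
      fix y assume "y \<in> D"
      then have "y(i := j) \<in> Hneq n X g i j k" using HjkE[of "y(i := j)"] by blast
      then show "fj y = c" using h unfolding dominates_def fj_def by blast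
    qed
  next
    assume h: "\<forall>y\<in>D. fj y = c"
    show "dominates n X g i j k c" unfolding dominates_def
    proof
      fix x assume "x \<in> Hneq n X g i j k"
      then obtain y where "y \<in> D" "x = y(i := j)" using HjkE[of x] by blast
      then show "g x = c" using h unfolding fj_def by blast
    qed
  qed
  have domkj: "dominates n X g i k j c \<longleftrightarrow> (\<forall>y\<in>D. fk y = c)" for c
  proof
    assume h: "dominates n X g i k j c"
    show "\<forall>y\<in>D. fk y = c"
    proof
      fix y assume "y \<in> D"
      then have "y(i := k) \<in> Hneq n X g i k j" using HkjE[of "y(i := k)"] by blast
      then show "fk y = c" using h unfolding dominates_def fk_def by blast
    qed
  next
    assume h: "\<forall>y\<in>D. fk y = c"
    show "dominates n X g i k j c" unfolding dominates_def
    proof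
      fix x assume "x \<in> Hneq n X g i k j"
      then obtain y where "y \<in> D" "x = y(i := k)" using HkjE[of x] by blast
      then show "g x = c" using h unfolding fk_def by blast
    qed
  qed
  let ?Cj = "\<exists>c. \<forall>y\<in>D. fj y = c"
  let ?Ck = "\<exists>c. \<forall>y\<in>D. fk y = c"
  have P1: "(\<exists>c\<in>A. strictly_dominates n X A g i j k c \<and>
        (\<exists>x\<in>Hneq n X g i k j. \<exists>x'\<in>Hneq n X g i k j.
            g x \<noteq> g x' \<and> g x \<noteq> c \<and> g x' \<noteq> c)) \<longleftrightarrow> ?Cj \<and> \<not> ?Ck"
  proof
    assume as: "?Cj \<and> \<not> ?Ck"
    then have nC: "\<not> ?Ck" by blast
    from as obtain c where c: "\<forall>y\<in>D. fj y = c" by blast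
    obtain y1 y2 where yy: "y1 \<in> D" "y2 \<in> D" "fk y1 \<noteq> fk y2"
    proof -
      have "\<exists>y\<in>D. fk y \<noteq> fk y0" using nC y0 by blast
      then show ?thesis using that y0 by blast
    qed
    have cA: "c \<in> A" using c inA_j y0 by metis
    have nd: "\<not> (\<exists>d\<in>A. dominates n X g i k j d)" using nC domkj by blast
    show "\<exists>c\<in>A. strictly_dominates n X A g i j k c \<and>
        (\<exists>x\<in>Hneq n X g i k j. \<exists>x'\<in>Hneq n X g i k j.
            g x \<noteq> g x' \<and> g x \<noteq> c \<and> g x' \<noteq> c)"
    proof (intro bexI[OF _ cA] conjI)
      show "strictly_dominates n X A g i j k c"
        unfolding strictly_dominates_def using nd domjk c by blast
      show "\<exists>x\<in>Hneq n X g i k j. \<exists>x'\<in>Hneq n X g i k j.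
            g x \<noteq> g x' \<and> g x \<noteq> c \<and> g x' \<noteq> c"
      proof -
        have m1: "y1(i := k) \<in> Hneq n X g i k j" "y2(i := k) \<in> Hneq n X g i k j"
          using HkjE yy by blast+
        have "fk y1 \<noteq> fk y2" "fk y1 \<noteq> c" "fk y2 \<noteq> c"
          using yy c neq by metis+
        then show ?thesis using m1 unfolding fk_def by blast
      qed
    qed
  next
    assume "\<exists>c\<in>A. strictly_dominates n X A g i j k c \<and>
        (\<exists>x\<in>Hneq n X g i k j. \<exists>x'\<in>Hneq n X g i k j.
            g x \<noteq> g x' \<and> g x \<noteq> c \<and> g x' \<noteq> c)"
    then obtain c where "strictly_dominates n X A g i j k c" by blast
    then have d1: "?Cj" and nd: "\<not> (\<exists>d\<in>A. \<forall>y\<in>D. fk y = d)"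
      unfolding strictly_dominates_def domjk domkj by blast+
    have "\<not> ?Ck"
    proof
      assume "?Ck"
      then obtain d where d: "\<forall>y\<in>D. fk y = d" by blast
      then have "d \<in> A" using inA_k[OF y0] y0 by auto
      then show False using nd d by blast
    qed
    then show "?Cj \<and> \<not> ?Ck" using d1 by blast
  qed
  have P2: "(\<exists>d\<in>A. strictly_dominates n X A g i k j d \<and>
        (\<exists>x\<in>Hneq n X g i j k. \<exists>x'\<in>Hneq n X g i j k.
            g x \<noteq> g x' \<and> g x \<noteq> d \<and> g x' \<noteq> d)) \<longleftrightarrow> ?Ck \<and> \<not> ?Cj"
  proof
    assume as: "?Ck \<and> \<not> ?Cj"
    then have nC: "\<not> ?Cj" by blast
    from as obtain c where c: "\<forall>y\<in>D. fk y = c" by blast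
    obtain y1 y2 where yy: "y1 \<in> D" "y2 \<in> D" "fj y1 \<noteq> fj y2"
    proof -
      have "\<exists>y\<in>D. fj y \<noteq> fj y0" using nC y0 by blast
      then show ?thesis using that y0 by blast
    qed
    have cA: "c \<in> A" using c inA_k y0 by metis
    have nd: "\<not> (\<exists>d\<in>A. dominates n X g i j k d)" using nC domjk by blast
    show "\<exists>c\<in>A. strictly_dominates n X A g i k j c \<and>
        (\<exists>x\<in>Hneq n X g i j k. \<exists>x'\<in>Hneq n X g i j k.
            g x \<noteq> g x' \<and> g x \<noteq> c \<and> g x' \<noteq> c)"
    proof (intro bexI[OF _ cA] conjI)
      show "strictly_dominates n X A g i k j c"
        unfolding strictly_dominates_def using nd domkj c by blast
      show "\<exists>x\<in>Hneq n X g i j k. \<exists>x'\<in>Hneq n X g i j k.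
            g x \<noteq> g x' \<and> g x \<noteq> c \<and> g x' \<noteq> c"
      proof -
        have m1: "y1(i := j) \<in> Hneq n X g i j k" "y2(i := j) \<in> Hneq n X g i j k"
          using HjkE yy by blast+
        have "fj y1 \<noteq> fj y2" "fj y1 \<noteq> c" "fj y2 \<noteq> c"
          using yy c neq by metis+
        then show ?thesis using m1 unfolding fj_def by blast
      qed
    qed
  next
    assume "\<exists>c\<in>A. strictly_dominates n X A g i k j c \<and>
        (\<exists>x\<in>Hneq n X g i j k. \<exists>x'\<in>Hneq n X g i j k.
            g x \<noteq> g x' \<and> g x \<noteq> c \<and> g x' \<noteq> c)"
    then obtain c where "strictly_dominates n X A g i k j c" by blast
    then have d1: "?Ck" and nd: "\<not> (\<exists>d\<in>A. \<forall>y\<in>D. fj y = d)"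
      unfolding strictly_dominates_def domkj domjk by blast+
    have "\<not> ?Cj"
    proof
      assume "?Cj"
      then obtain d where d: "\<forall>y\<in>D. fj y = d" by blast
      then have "d \<in> A" using inA_j[OF y0] y0 by auto
      then show False using nd d by blast
    qed
    then show "?Ck \<and> \<not> ?Cj" using d1 by blast
  qed
  have P3: "(\<exists>c\<in>A. \<exists>d\<in>A. c \<noteq> d \<and> dominates n X g i j k c \<and> dominates n X g i k j d)
     \<longleftrightarrow> ?Cj \<and> ?Ck"
  proof
    assume "?Cj \<and> ?Ck"
    then obtain c d where c: "\<forall>y\<in>D. fj y = c" and d: "\<forall>y\<in>D. fk y = d" by blast
    have "c \<in> A" "d \<in> A" "c \<noteq> d" using c d inA_j inA_k y0 neq by auto
    then show "\<exists>c\<in>A. \<exists>d\<in>A. c \<noteq> d \<and> dominates n X g i j k c \<and> dominates n X g i k j d"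
      unfolding domjk domkj using c d by blast
  qed (auto simp: domjk domkj)
  show ?thesis unfolding exactly_one3_def P1 P2 P3
    using abstract_key[OF neq pair] by blast
qed

end
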